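(* Let $\omega_0,\alpha,\omega_d>0$, $J_0=\begin{bmatrix}0&\omega_0\\-\omega_0&0\end{bmatrix}$, $\tilde\Lambda=\begin{bmatrix}0&0\\0&-\frac{\alpha}{2}\end{bmatrix}$, and consider the system on $\mathbb{R}^3$ $$\dot{\bar z}=(J_0+\tilde\Lambda)\bar z+(e^{\hat d}-1)\tilde\Lambda\bar z,\qquad \dot{\hat d}=-\omega_d(e^{\hat d}-1).$$ Let $$P=\begin{bmatrix}\frac{\alpha}{4\omega_0^2}+\frac{2}{\alpha}&\frac{1}{2\omega_0}\\ \frac{1}{2\omega_0}&\frac{2}{\alpha}\end{bmatrix},\qquad G=P\tilde\Lambda+\tilde\Lambda^\top P,\qquad b=\frac{\|G\|^2}{2\lambda_{\min}(P)},$$ where $\|G\|$ is the spectral norm and $\lambda_{\min}(P)$ the smallest eigenvalue of $P$. Then $P=P^\top>0$, $P(J_0+\tilde\Lambda)+(J_0+\tilde\Lambda)^\top P=-I$, and the function $$V(\bar z,\hat d)=\ln(1+\bar z^\top P\bar z)+\frac{b}{\omega_d}(e^{\hat d}-\hat d-1)$$ satisfies, along trajectories of the system, for all $(\bar z,\hat d)\in\mathbb{R}^2\times\mathbb{R}$, $$\dot V\le\frac{-\frac12|\bar z|^2-b(e^{\hat d}-1)^2}{1+\bar z^\top P\bar z}.$$ *)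

theory Defs
  imports "HOL-Analysis.Analysis"
begin

definition J0 :: "real \<Rightarrow> real^2^2" where
  "J0 \<omega>0 = vector [vector [0, \<omega>0], vector [-\<omega>0, 0]]"

definition Lam :: "real \<Rightarrow> real^2^2" where
  "Lam \<alpha> = vector [vector [0, 0], vector [0, -\<alpha>/2]]"

definition Pmat :: "real \<Rightarrow> real \<Rightarrow> real^2^2" where
  "Pmat \<omega>0 \<alpha> = vector [vector [\<alpha>/(4*\<omega>0^2) + 2/\<alpha>, 1/(2*\<omega>0)],
                            vector [1/(2*\<omega>0), 2/\<alpha>]]"

definition spec_norm :: "real^'n^'m \<Rightarrow> real" where
  "spec_norm A = onorm (\<lambda>x. A *v x)"

definition eigenvalues :: "real^'n^'n \<Rightarrow> real set" where
  "eigenvalues A = {l. \<exists>v. v \<noteq> 0 \<and> A *v v = l *\<^sub>R v}"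

definition lambda_min :: "real^'n^'n \<Rightarrow> real" where
  "lambda_min A = Min (eigenvalues A)"

definition pos_def :: "real^'n^'n \<Rightarrow> bool" where
  "pos_def A \<longleftrightarrow> (\<forall>x. x \<noteq> 0 \<longrightarrow> x \<bullet> (A *v x) > 0)"

end

theory Submission
  imports Defs
begin


lemma inner_mv2: "(u::real^2) \<bullet> ((M::real^2^2) *v v) = u$1 * (M$1$1 * v$1 + M$1$2 * v$2) + u$2 * (M$2$1 * v$1 + M$2$2 * v$2)"
  by (simp add: inner_vec_def matrix_vector_mult_def sum_2)

lemma norm2_2: "(norm (z::real^2))^2 = z$1^2 + z$2^2"
  by (simp only: power2_norm_eq_inner) (simp add: inner_vec_def sum_2 power2_eq_square)

lemma quad_nonneg:
  fixes p t c x y :: real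
  assumes "p \<ge> 0" "p * t = c^2" "c \<noteq> 0"
  shows "p * x^2 + 2*c*x*y + t*y^2 \<ge> 0"
proof -
  have "p > 0" using assms by (cases "p = 0") auto
  have "p * (p * x^2 + 2*c*x*y + t*y^2) = (p*x + c*y)^2"
    using assms(2) by (simp add: power2_eq_square algebra_simps)
  also have "\<dots> \<ge> 0" by simp
  finally show ?thesis using \<open>p > 0\<close> by (simp add: zero_le_mult_iff)
qed

lemma eig2:
  fixes M :: "real^2^2" and pa pc pe :: real
  assumes M: "M = vector [vector [pa, pc], vector [pc, pe]]" and pc: "pc \<noteq> 0"
  shows "(\<exists>v. v \<noteq> 0 \<and> M *v v = l *\<^sub>R v) \<longleftrightarrow> (pa - l) * (pe - l) = pc^2"
proof
  assume "\<exists>v. v \<noteq> 0 \<and> M *v v = l *\<^sub>R v"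
  then obtain v where v: "v \<noteq> 0" "M *v v = l *\<^sub>R v" by blast
  have e1: "pa * v$1 + pc * v$2 = l * v$1" and e2: "pc * v$1 + pe * v$2 = l * v$2"
    using v(2) by (simp_all add: vec_eq_iff forall_2 M matrix_vector_mult_def sum_2)
  have nz: "v$1 \<noteq> 0 \<or> v$2 \<noteq> 0" using v(1) by (auto simp: vec_eq_iff forall_2)
  have a: "(pa - l) * v$1 = - pc * v$2" using e1 by (simp add: algebra_simps)
  have b: "(pe - l) * v$2 = - pc * v$1" using e2 by (simp add: algebra_simps)
  have "v$1 \<noteq> 0" using a b nz pc by auto
  moreover have "v$2 \<noteq> 0" using a b nz pc by auto
  moreover have "((pa - l) * (pe - l)) * (v$1 * v$2) = pc^2 * (v$1 * v$2)"
  proof -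
    have "((pa - l) * (pe - l)) * (v$1 * v$2) = ((pa - l) * v$1) * ((pe - l) * v$2)" by (simp add: algebra_simps)
    also have "\<dots> = pc^2 * (v$1 * v$2)" by (simp only: a b) (simp add: power2_eq_square algebra_simps)
    finally show ?thesis .
  qed
  ultimately show "(pa - l) * (pe - l) = pc^2" by simp
next
  assume h: "(pa - l) * (pe - l) = pc^2"
  define v :: "real^2" where "v = vector [pc, l - pa]"
  have "v $ 1 \<noteq> 0" using pc by (simp add: v_def)
  hence "v \<noteq> 0" by auto
  moreover have "M *v v = l *\<^sub>R v"
    using h by (simp add: vec_eq_iff forall_2 M matrix_vector_mult_def sum_2 v_def power2_eq_square algebra_simps)
  ultimately show "\<exists>v. v \<noteq> 0 \<and> M *v v = l *\<^sub>R v" by blast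
qed

lemma quad_roots:
  fixes pa pc pe l :: real
  defines "r \<equiv> sqrt ((pa - pe)^2/4 + pc^2)"
  shows "(pa - l) * (pe - l) = pc^2 \<longleftrightarrow> l = (pa+pe)/2 - r \<or> l = (pa+pe)/2 + r"
proof -
  have r2: "r^2 = (pa - pe)^2/4 + pc^2" unfolding r_def by simp
  have r0: "r \<ge> 0" unfolding r_def by simp
  have "(pa - l) * (pe - l) = pc^2 \<longleftrightarrow> (l - (pa+pe)/2)^2 = r^2"
  proof -
    have "(pa - l) * (pe - l) - pc^2 = (l - (pa+pe)/2)^2 - ((pa - pe)^2/4 + pc^2)"
      by (simp add: power2_eq_square field_simps)
    then show ?thesis unfolding r2 by auto
  qed
  also have "\<dots> \<longleftrightarrow> l - (pa+pe)/2 = r \<or> l - (pa+pe)/2 = - r"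
    by (simp add: power2_eq_iff)
  finally show ?thesis by auto
qed


lemma final_ineq:
  fixes n2 g s q N l b :: real
  assumes l: "l > 0" and q: "q \<ge> l*n2" and n2: "n2 \<ge> 0" and g: "\<bar>g\<bar> \<le> N*n2" and b: "b = N^2/(2*l)"
  shows "(-n2 + s*g)/(1+q) - b*(s^2) \<le> (-(1/2)*n2 - b*(s^2))/(1+q)"
proof -
  have q0: "q \<ge> 0" using l n2 q by (meson mult_nonneg_nonneg order.trans less_imp_le)
  have b0: "b \<ge> 0" using b l by simp
  have "s*g \<le> \<bar>s\<bar> * \<bar>g\<bar>" by (simp add: abs_mult[symmetric])
  also have "\<dots> \<le> \<bar>s\<bar> * (N*n2)" using g by (simp add: mult_left_mono)
  also have "\<dots> \<le> n2/2 + (s^2)*(N^2)*n2/2"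
  proof -
    have "0 \<le> (\<bar>s\<bar>*N - 1)^2 * n2" using n2 by simp
    thus ?thesis by (simp add: power2_eq_square algebra_simps)
  qed
  also have "(s^2)*(N^2)*n2/2 = b*(s^2)*(l*n2)" using b l by (simp add: field_simps)
  also have "b*(s^2)*(l*n2) \<le> b*(s^2)*q" using q b0 by (simp add: mult_left_mono)
  finally have key: "s*g \<le> n2/2 + b*(s^2)*q" by simp
  have "(-n2 + s*g)/(1+q) - b*(s^2) = (-n2 + s*g - b*(s^2)*(1+q))/(1+q)" using q0 by (simp add: field_simps)
  also have "\<dots> \<le> (-(1/2)*n2 - b*(s^2))/(1+q)"
    using key q0 by (intro divide_right_mono) (auto simp: algebra_simps)
  finally show ?thesis .
qed

theorem mainTheorem4:
  fixes \<omega>0 \<alpha> \<omega>d :: real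
  assumes "\<omega>0 > 0" "\<alpha> > 0" "\<omega>d > 0"
  defines "A \<equiv> J0 \<omega>0 + Lam \<alpha>"
      and "P \<equiv> Pmat \<omega>0 \<alpha>"
      and "G \<equiv> Pmat \<omega>0 \<alpha> ** Lam \<alpha> + transpose (Lam \<alpha>) ** Pmat \<omega>0 \<alpha>"
  defines "b \<equiv> (spec_norm G)^2 / (2 * lambda_min P)"
  defines "V \<equiv> (\<lambda>(z::real^2, d::real). ln (1 + z \<bullet> (P *v z)) + b / \<omega>d * (exp d - d - 1))"
      and "F \<equiv> (\<lambda>(z::real^2, d::real). (A *v z + (exp d - 1) *\<^sub>R (Lam \<alpha> *v z), - \<omega>d * (exp d - 1)))"
  shows "transpose P = P \<and> pos_def P \<and> P ** A + transpose A ** P = - mat 1 \<and>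
         (\<forall>z d. \<exists>V'. (V has_derivative V') (at (z, d)) \<and>
            V' (F (z, d)) \<le> (- (1/2) * (norm z)^2 - b * (exp d - 1)^2) / (1 + z \<bullet> (P *v z)))"
proof -
  note w0 = assms(1) and al = assms(2) and wd = assms(3)
  define pa where "pa = \<alpha>/(4*\<omega>0^2) + 2/\<alpha>"
  define pc where "pc = 1/(2*\<omega>0)"
  define pe where "pe = 2/\<alpha>"
  have PP: "P = vector [vector [pa, pc], vector [pc, pe]]"
    unfolding P_def Pmat_def pa_def pc_def pe_def by simp
  have pc0: "pc \<noteq> 0" "pc > 0" using w0 by (auto simp: pc_def)
  have pa0: "pa > 0" using w0 al by (simp add: pa_def add_pos_pos)
  have pe0: "pe > 0" using al by (simp add: pe_def)
  have detP: "pa*pe - pc^2 = 1/(4*\<omega>0^2) + 4/\<alpha>^2"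
    using w0 al by (simp add: pa_def pc_def pe_def field_simps power2_eq_square)
  have det0: "pa*pe - pc^2 > 0" unfolding detP using w0 al by (simp add: add_pos_pos)
  define m where "m = (pa+pe)/2"
  define r where "r = sqrt ((pa - pe)^2/4 + pc^2)"
  define l1 where "l1 = m - r"
  have r0: "r \<ge> 0" unfolding r_def by simp
  have r2: "r^2 = (pa - pe)^2/4 + pc^2" unfolding r_def by simp
  have eigs: "eigenvalues P = {m - r, m + r}"
    unfolding eigenvalues_def eig2[OF PP pc0(1)] quad_roots m_def r_def by auto
  have lmin: "lambda_min P = l1"
    unfolding lambda_min_def eigs l1_def using r0 by (simp add: min_def)
  have "r^2 < m^2" unfolding r2 m_def using det0 by (simp add: power2_eq_square field_simps)
  hence "r < m" using pa0 pe0 by (intro power_less_imp_less_base[of r 2 m]) (auto simp: m_def)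
  hence l1pos: "l1 > 0" by (simp add: l1_def)
  have "(\<bar>pa - pe\<bar>/2)^2 \<le> r^2" unfolding r2 by (simp add: power_divide)
  hence "\<bar>pa - pe\<bar>/2 \<le> r" using r0 by (rule power2_le_imp_le)
  hence l1pa: "l1 \<le> pa" and l1pe: "l1 \<le> pe" by (auto simp: l1_def m_def abs_if field_simps split: if_splits)
  have l1root: "(pa - l1) * (pe - l1) = pc^2"
    using quad_roots[where pa=pa and pe=pe and pc=pc and l=l1] by (simp add: l1_def m_def r_def)
  have qge: "z \<bullet> (P *v z) \<ge> l1 * (norm z)^2" for z :: "real^2"
  proof -
    have "0 \<le> (pa - l1) * (z$1)^2 + 2*pc*(z$1)*(z$2) + (pe - l1)*(z$2)^2"
      using quad_nonneg[of "pa - l1" "pe - l1" pc] l1pa l1root pc0 by simp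
    thus ?thesis unfolding norm2_2 by (simp add: inner_mv2 PP power2_eq_square algebra_simps)
  qed
  have sym: "transpose P = P"
    by (simp add: PP vec_eq_iff forall_2 transpose_def)
  have pd: "pos_def P" unfolding pos_def_def
  proof (intro allI impI)
    fix x :: "real^2" assume "x \<noteq> 0"
    hence "norm x > 0" by simp
    hence "l1 * (norm x)^2 > 0" using l1pos by simp
    thus "x \<bullet> (P *v x) > 0" using qge[of x] by linarith
  qed
  have lyap: "P ** A + transpose A ** P = - mat 1"
    using w0 al
    by (simp add: PP A_def J0_def Lam_def vec_eq_iff forall_2 transpose_def matrix_matrix_mult_def
        sum_2 mat_def pa_def pc_def pe_def field_simps power2_eq_square)
  have deriv: "\<exists>V'. (V has_derivative V') (at (z, d)) \<and>
            V' (F (z, d)) \<le> (- (1/2) * (norm z)^2 - b * (exp d - 1)^2) / (1 + z \<bullet> (P *v z))"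
    for z d
  proof -
    define q where "q = z \<bullet> (P *v z)"
    have q0: "q \<ge> 0" using qge[of z] l1pos unfolding q_def
      by (meson order.trans mult_nonneg_nonneg less_imp_le zero_le_power2)
    define s where "s = exp d - 1"
    define V' where "V' = (\<lambda>h::(real^2)\<times>real. (z \<bullet> (P *v fst h) + fst h \<bullet> (P *v z)) * inverse (1+q) + b/\<omega>d*(exp d * snd h - snd h))"
    have hV: "V = (\<lambda>p. ln (1 + fst p \<bullet> (P *v fst p)) + b/\<omega>d*(exp (snd p) - snd p - 1))"
      by (simp add: V_def fun_eq_iff split_def)
    have hP: "((\<lambda>p::(real^2)\<times>real. P *v fst p) has_derivative (\<lambda>h. P *v fst h)) (at (z,d))"
      by (rule bounded_linear_imp_has_derivative, rule bounded_linear_compose[OF matrix_vector_mul_bounded_linear bounded_linear_fst])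
    have D: "(V has_derivative V') (at (z,d))" unfolding hV V'_def
      using q0 unfolding q_def
      apply -
      apply (rule derivative_eq_intros refl hP | simp)+
      apply (simp add: fun_eq_iff mult.commute)
      done
    define w where "w = A *v z + s *\<^sub>R (Lam \<alpha> *v z)"
    have Fz: "F (z,d) = (w, - \<omega>d * s)" by (simp add: F_def w_def s_def)
    have ident: "z \<bullet> (P *v w) + w \<bullet> (P *v z) = - ((norm z)^2) + s * (z \<bullet> (G *v z))"
      unfolding norm2_2 inner_mv2
      using w0 al by (simp add: w_def PP A_def J0_def Lam_def G_def Pmat_def pa_def pc_def pe_def
          matrix_matrix_mult_def transpose_def matrix_vector_mult_def sum_2 field_simps power2_eq_square)
    have gb: "\<bar>z \<bullet> (G *v z)\<bar> \<le> spec_norm G * (norm z)^2"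
    proof -
      have "\<bar>z \<bullet> (G *v z)\<bar> \<le> norm z * norm (G *v z)" by (rule Cauchy_Schwarz_ineq2)
      also have "\<dots> \<le> norm z * (spec_norm G * norm z)"
        unfolding spec_norm_def
        by (rule mult_left_mono[OF onorm[OF matrix_vector_mul_bounded_linear]]) simp
      finally show ?thesis by (simp add: power2_eq_square algebra_simps)
    qed
    have V'F: "V' (F (z,d)) = (- ((norm z)^2) + s * (z \<bullet> (G *v z)))/(1+q) - b * (s^2)"
    proof -
      have es: "exp d = s + 1" by (simp add: s_def)
      have e: "b/\<omega>d*(exp d*(-\<omega>d* s) - (-\<omega>d* s)) = - b*(s^2)"
        unfolding es using wd by (simp add: power2_eq_square field_simps)
      show ?thesis unfolding Fz V'_def ident[symmetric] using e
        by (simp add: divide_inverse)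
    qed
    have "V' (F (z,d)) \<le> (- (1/2) * (norm z)^2 - b * (s^2)) / (1 + q)"
      unfolding V'F
      by (rule final_ineq[where l=l1 and N="spec_norm G"])
         (use l1pos qge[of z] gb in \<open>auto simp: q_def b_def lmin\<close>)
    thus ?thesis using D by (auto simp: q_def s_def)
  qed
  show ?thesis using sym pd lyap deriv by blast
qed

end
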